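(* Let $\mathcal B$ be a bilinear form on $\mathbb C[z]$, let $s^*,s^\dagger\in\mathbb C$, and define bilinear forms $\mathcal B^*,\mathcal B^\dagger$ on $\mathbb C[z]$ by $\mathcal B^*[z^i,z^j]:=\mathcal B[(z-s^* )z^i,z^j]$ and $\mathcal B^\dagger[z^i,z^j]:=\mathcal B[z^i,(z-s^\dagger)z^j]$ for all $i,j\ge0$. Let $\tau_0:=1$, $\tau_n:=\det(\mathcal B[z^i,z^j])_{i,j=0}^{n-1}$ ($n\ge1$), assumed nonzero. Suppose that $\{\phi_n\},\{\psi_n\}$; $\{\phi^*_n\},\{\psi^*_n\}$; and $\{\phi^\dagger_n\},\{\psi^\dagger_n\}$ (indexed by $n\ge0$) are the pairs of monic biorthogonal polynomial sequences with respect to $\mathcal B$, $\mathcal B^*$ and $\mathcal B^\dagger$ respectively, and that $\phi_n(s^* )\neq0$ and $\psi_n(s^\dagger)\neq0$ for all $n\ge0$. Then for all $n\ge0$: \begin{align*} (z-s^* )\phi^*_n(z)&=\phi_{n+1}(z)+q^*_n\phi_n(z), & q^*_n&=-\frac{\phi_{n+1}(s^* )}{\phi_n(s^* )},\\ \phi_{n+1}(z)&=\phi^\dagger_{n+1}(z)+e^\dagger_n\phi^\dagger_n(z), & e^\dagger_n&=\frac{\tau_n\tau_{n+2}}{q^\dagger_n\tau_{n+1}^2},\\ (z-s^\dagger)\psi^\dagger_n(z)&=\psi_{n+1}(z)+q^\dagger_n\psi_n(z), & q^\dagger_n&=-\frac{\psi_{n+1}(s^\dagger)}{\psi_n(s^\dagger)},\\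 \psi_{n+1}(z)&=\psi^*_{n+1}(z)+e^*_n\psi^*_n(z), & e^*_n&=\frac{\tau_n\tau_{n+2}}{q^*_n\tau_{n+1}^2}. \end{align*}
   Context: For a bilinear form $\mathcal C$ on $\mathbb C[z]$, a pair of monic biorthogonal polynomial sequences $\{\phi_n\}_{n\ge0},\{\psi_n\}_{n\ge0}$ with respect to $\mathcal C$ means: $\deg\phi_n=\deg\psi_n=n$, $\phi_n$ and $\psi_n$ are monic, and $\mathcal C[\phi_m,\psi_n]=h_n\delta_{m,n}$ with $h_n\neq0$ for all $m,n\ge0$ ($\delta$ the Kronecker delta). *)

theory Defs
  imports "HOL-Computational_Algebra.Polynomial" "Jordan_Normal_Form.Determinant"
begin

definition bilinear_form :: "(complex poly \<Rightarrow> complex poly \<Rightarrow> complex) \<Rightarrow> bool" where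
  "bilinear_form B \<longleftrightarrow>
     (\<forall>p p' q. B (p + p') q = B p q + B p' q) \<and>
     (\<forall>c p q. B (smult c p) q = c * B p q) \<and>
     (\<forall>p q q'. B p (q + q') = B p q + B p q') \<and>
     (\<forall>c p q. B p (smult c q) = c * B p q)"

definition monic_biorth :: "(complex poly \<Rightarrow> complex poly \<Rightarrow> complex)
    \<Rightarrow> (nat \<Rightarrow> complex poly) \<Rightarrow> (nat \<Rightarrow> complex poly) \<Rightarrow> bool" where
  "monic_biorth B \<phi> \<psi> \<longleftrightarrow>
     (\<forall>n. degree (\<phi> n) = n \<and> degree (\<psi> n) = n \<and>
          lead_coeff (\<phi> n) = 1 \<and> lead_coeff (\<psi> n) = 1) \<and>
     (\<forall>n. \<exists>h. h \<noteq> 0 \<and> (\<forall>m. B (\<phi> m) (\<psi> n) = (if m = n then h else 0)))"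

definition tau :: "(complex poly \<Rightarrow> complex poly \<Rightarrow> complex) \<Rightarrow> nat \<Rightarrow> complex" where
  "tau B n = (if n = 0 then 1
     else det (mat n n (\<lambda>(i, j). B (monom 1 i) (monom 1 j))))"

end

theory Submission
  imports Defs
begin

lemma bil_diff_l: "bilinear_form B \<Longrightarrow> B (p - p') q = B p q - B p' q"
proof -
  assume b: "bilinear_form B"
  have "B (p - p' + p') q = B (p - p') q + B p' q" using b unfolding bilinear_form_def by blast
  thus ?thesis by simp
qed

lemma bil_diff_r: "bilinear_form B \<Longrightarrow> B p (q - q') = B p q - B p q'"
proof -
  assume b: "bilinear_form B"
  have "B p (q - q' + q') = B p (q - q') + B p q'" using b unfolding bilinear_form_def by blast
  thus ?thesis by simp
qed

lemma bil_sum_l: assumes b: "bilinear_form B" shows "finite A \<Longrightarrow> B (sum f A) q = (\<Sum>a\<in>A. B (f a) q)"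
proof (induction A rule: finite_induct)
  case empty
  have "B (0 + 0) q = B 0 q + B 0 q" using b unfolding bilinear_form_def by blast
  then show ?case by simp
next
  case (insert x F)
  then show ?case using b unfolding bilinear_form_def by simp
qed

lemma bil_sum_r: assumes b: "bilinear_form B" shows "finite A \<Longrightarrow> B q (sum f A) = (\<Sum>a\<in>A. B q (f a))"
proof (induction A rule: finite_induct)
  case empty
  have "B q (0 + 0) = B q 0 + B q 0" using b unfolding bilinear_form_def by blast
  then show ?case by simp
next
  case (insert x F)
  then show ?case using b unfolding bilinear_form_def by simp
qed

lemma expand_l:
  assumes b: "bilinear_form B" and d: "degree p < N"
  shows "B p q = (\<Sum>i<N. coeff p i * B (monom 1 i) q)"
proof -
  have N: "N = Suc (N - 1)" using d by simp
  have "(\<Sum>i\<le>N - 1. monom (coeff p i) i) = p"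
    by (rule poly_as_sum_of_monoms') (use d in simp)
  hence "(\<Sum>i<N. monom (coeff p i) i) = p"
    by (subst N) (simp only: lessThan_Suc_atMost)
  hence "p = (\<Sum>i<N. smult (coeff p i) (monom 1 i))"
    by (simp add: smult_monom)
  hence "B p q = B (\<Sum>i<N. smult (coeff p i) (monom 1 i)) q" by simp
  also have "\<dots> = (\<Sum>i<N. coeff p i * B (monom 1 i) q)"
    using b by (simp add: bil_sum_l bilinear_form_def)
  finally show ?thesis .
qed

lemma expand_r:
  assumes b: "bilinear_form B" and d: "degree q < N"
  shows "B p q = (\<Sum>i<N. coeff q i * B p (monom 1 i))"
proof -
  have N: "N = Suc (N - 1)" using d by simp
  have "(\<Sum>i\<le>N - 1. monom (coeff q i) i) = q"
    by (rule poly_as_sum_of_monoms') (use d in simp)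
  hence "(\<Sum>i<N. monom (coeff q i) i) = q"
    by (subst N) (simp only: lessThan_Suc_atMost)
  hence "q = (\<Sum>i<N. smult (coeff q i) (monom 1 i))"
    by (simp add: smult_monom)
  hence "B p q = B p (\<Sum>i<N. smult (coeff q i) (monom 1 i))" by simp
  also have "\<dots> = (\<Sum>i<N. coeff q i * B p (monom 1 i))"
    using b by (simp add: bil_sum_r bilinear_form_def)
  finally show ?thesis .
qed

lemma bil_ext:
  assumes "bilinear_form B1" "bilinear_form B2"
    and "\<And>i j. B1 (monom 1 i) (monom 1 j) = B2 (monom 1 i) (monom 1 j)"
  shows "B1 p q = B2 p q"
proof -
  have "B1 p q = (\<Sum>i<Suc (degree p). coeff p i * B1 (monom 1 i) q)"
    by (rule expand_l[OF assms(1)]) simp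
  also have "\<dots> = (\<Sum>i<Suc (degree p). coeff p i * B2 (monom 1 i) q)"
  proof (rule sum.cong[OF refl])
    fix i
    have "B1 (monom 1 i) q = (\<Sum>j<Suc (degree q). coeff q j * B1 (monom 1 i) (monom 1 j))"
      by (rule expand_r[OF assms(1)]) simp
    also have "\<dots> = (\<Sum>j<Suc (degree q). coeff q j * B2 (monom 1 i) (monom 1 j))"
      using assms(3) by simp
    also have "\<dots> = B2 (monom 1 i) q"
      by (rule expand_r[OF assms(2), symmetric]) simp
    finally show "coeff p i * B1 (monom 1 i) q = coeff p i * B2 (monom 1 i) q" by simp
  qed
  also have "\<dots> = B2 p q" by (rule expand_l[OF assms(2), symmetric]) simp
  finally show ?thesis .
qed

lemma bil_mult_l: "bilinear_form B \<Longrightarrow> bilinear_form (\<lambda>p q. B (x * p) q)"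
  unfolding bilinear_form_def by (simp add: distrib_left)

lemma bil_mult_r: "bilinear_form B \<Longrightarrow> bilinear_form (\<lambda>p q. B p (x * q))"
  unfolding bilinear_form_def by (simp add: distrib_left)

lemma bil_transp: "bilinear_form B \<Longrightarrow> bilinear_form (\<lambda>p q. B q p)"
  unfolding bilinear_form_def by simp

lemma mb_transp:
  assumes a0: "monic_biorth B \<phi> \<psi>" shows "monic_biorth (\<lambda>p q. B q p) \<psi> \<phi>"
proof -
  have a: "(\<forall>n. degree (\<phi> n) = n \<and> degree (\<psi> n) = n \<and> lead_coeff (\<phi> n) = 1 \<and> lead_coeff (\<psi> n) = 1) \<and>
    (\<forall>n. \<exists>h. h \<noteq> 0 \<and> (\<forall>m. B (\<phi> m) (\<psi> n) = (if m = n then h else 0)))"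
    using a0 unfolding monic_biorth_def by blast
  have "\<exists>h. h \<noteq> 0 \<and> (\<forall>m. B (\<phi> n) (\<psi> m) = (if m = n then h else 0))" for n
  proof -
  obtain h where h: "h \<noteq> 0" "\<forall>m. B (\<phi> m) (\<psi> n) = (if m = n then h else 0)" using a by blast
  have "\<forall>m. B (\<phi> n) (\<psi> m) = (if m = n then h else 0)"
  proof
    fix m show "B (\<phi> n) (\<psi> m) = (if m = n then h else 0)"
    proof (cases "m = n")
      case True then show ?thesis using h by simp
    next
      case False
      obtain h' where "\<forall>k. B (\<phi> k) (\<psi> m) = (if k = m then h' else 0)" using a by blast
      then show ?thesis using False by auto
    qed
  qed
  then show ?thesis using h by blast
  qed
  then show ?thesis using a unfolding monic_biorth_def by blast
qed

locale biorth =
  fixes B :: "complex poly \<Rightarrow> complex poly \<Rightarrow> complex" and \<phi> \<psi> :: "nat \<Rightarrow> complex poly"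
  assumes bil: "bilinear_form B" and mb: "monic_biorth B \<phi> \<psi>"
begin

definition h where "h n = B (\<phi> n) (\<psi> n)"

lemma deg_phi: "degree (\<phi> n) = n" and deg_psi: "degree (\<psi> n) = n"
  and lc_phi: "coeff (\<phi> n) n = 1" and lc_psi: "coeff (\<psi> n) n = 1"
proof -
  have a: "degree (\<phi> n) = n \<and> degree (\<psi> n) = n \<and> lead_coeff (\<phi> n) = 1 \<and> lead_coeff (\<psi> n) = 1"
    using mb unfolding monic_biorth_def by blast
  then have d1: "degree (\<phi> n) = n" and d2: "degree (\<psi> n) = n"
    and l1: "coeff (\<phi> n) (degree (\<phi> n)) = 1" and l2: "coeff (\<psi> n) (degree (\<psi> n)) = 1"
    by blast+
  show "degree (\<phi> n) = n" "degree (\<psi> n) = n" "coeff (\<phi> n) n = 1" "coeff (\<psi> n) n = 1"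
    using d1 d2 l1[unfolded d1] l2[unfolded d2] by blast+
qed

lemma orth: "m \<noteq> n \<Longrightarrow> B (\<phi> m) (\<psi> n) = 0"
proof -
  assume "m \<noteq> n"
  moreover obtain c where "\<forall>k. B (\<phi> k) (\<psi> n) = (if k = n then c else 0)"
    using mb unfolding monic_biorth_def by blast
  ultimately show ?thesis by simp
qed

lemma h_nz: "h n \<noteq> 0"
proof -
  obtain c where "c \<noteq> 0" "\<forall>k. B (\<phi> k) (\<psi> n) = (if k = n then c else 0)"
    using mb unfolding monic_biorth_def by blast
  thus ?thesis unfolding h_def by simp
qed

lemma smult_l: "B (smult c p) q = c * B p q"
  using bil unfolding bilinear_form_def by blast
lemma smult_r: "B p (smult c q) = c * B p q"
  using bil unfolding bilinear_form_def by blast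
lemma add_l: "B (p + p') q = B p q + B p' q"
  using bil unfolding bilinear_form_def by blast
lemma add_r: "B p (q + q') = B p q + B p q'"
  using bil unfolding bilinear_form_def by blast

lemma mon_psi: "i \<le> n \<Longrightarrow> B (monom 1 i) (\<psi> n) = (if i = n then h n else 0)"
proof (induction i rule: less_induct)
  case (less i)
  have "B (\<phi> i) (\<psi> n) = (\<Sum>k<Suc i. coeff (\<phi> i) k * B (monom 1 k) (\<psi> n))"
    by (rule expand_l[OF bil]) (simp add: deg_phi)
  also have "\<dots> = (\<Sum>k<i. coeff (\<phi> i) k * B (monom 1 k) (\<psi> n)) + B (monom 1 i) (\<psi> n)"
    by (simp add: lc_phi)
  also have "(\<Sum>k<i. coeff (\<phi> i) k * B (monom 1 k) (\<psi> n)) = 0"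
    by (rule sum.neutral) (use less in auto)
  finally have "B (monom 1 i) (\<psi> n) = B (\<phi> i) (\<psi> n)" by simp
  then show ?case by (simp add: h_def orth)
qed

lemma gen_psi: "degree p \<le> n \<Longrightarrow> B p (\<psi> n) = coeff p n * h n"
proof -
  assume d: "degree p \<le> n"
  have "B p (\<psi> n) = (\<Sum>i<Suc n. coeff p i * B (monom 1 i) (\<psi> n))"
    by (rule expand_l[OF bil]) (use d in simp)
  also have "\<dots> = (\<Sum>i<Suc n. if i = n then coeff p n * h n else 0)"
    by (rule sum.cong) (auto simp: mon_psi)
  also have "\<dots> = coeff p n * h n" by simp
  finally show ?thesis .
qed

lemma uniq:
  assumes o: "\<forall>j<n. B r (monom 1 j) = 0" and c: "\<forall>k\<ge>n. coeff r k = 0"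
  shows "r = 0"
proof (rule ccontr)
  assume r: "r \<noteq> 0"
  define d where "d = degree r"
  have cd: "coeff r d \<noteq> 0" using r unfolding d_def by simp
  hence dn: "d < n" using c by (meson not_le)
  have "B r (\<psi> d) = coeff r d * h d" by (rule gen_psi) (simp add: d_def)
  hence ne: "B r (\<psi> d) \<noteq> 0" using cd h_nz by simp
  have "B r (\<psi> d) = (\<Sum>j<Suc d. coeff (\<psi> d) j * B r (monom 1 j))"
    by (rule expand_r[OF bil]) (simp add: deg_psi)
  also have "\<dots> = 0" by (rule sum.neutral) (use o dn in auto)
  finally show False using ne by simp
qed

end

lemma (in biorth) T: "biorth (\<lambda>p q. B q p) \<psi> \<phi>"
  unfolding biorth_def using bil_transp[OF bil] mb_transp[OF mb] by blast

lemma (in biorth) T_h: "biorth.h (\<lambda>p q. B q p) \<psi> \<phi> = h"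
proof -
  interpret T: biorth "\<lambda>p q. B q p" \<psi> \<phi> by (rule T)
  show ?thesis unfolding T.h_def h_def by auto
qed

lemma (in biorth) gen_phi: "degree q \<le> n \<Longrightarrow> B (\<phi> n) q = coeff q n * h n"
proof -
  interpret T: biorth "\<lambda>p q. B q p" \<psi> \<phi> by (rule T)
  show "degree q \<le> n \<Longrightarrow> B (\<phi> n) q = coeff q n * h n" using T.gen_psi T_h by simp
qed

lemma (in biorth) decomp:
  assumes d: "degree P \<le> Suc n" and l: "coeff P (Suc n) = 1"
    and o: "\<forall>j<n. B P (monom 1 j) = 0"
  shows "\<exists>c. P = \<phi> (Suc n) + smult c (\<phi> n)"
proof -
  define c where "c = coeff P n - coeff (\<phi> (Suc n)) n"
  define R where "R = P - \<phi> (Suc n) - smult c (\<phi> n)"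
  have "R = 0"
  proof (rule uniq[of n])
    show "\<forall>j<n. B R (monom 1 j) = 0"
    proof (intro allI impI)
      fix j assume j: "j < n"
      have "B (\<phi> (Suc n)) (monom 1 j) = 0" using gen_phi[of "monom 1 j" "Suc n"] j
        by (simp add: degree_monom_eq coeff_monom)
      moreover have "B (\<phi> n) (monom 1 j) = 0" using gen_phi[of "monom 1 j" n] j
        by (simp add: degree_monom_eq coeff_monom)
      ultimately show "B R (monom 1 j) = 0" unfolding R_def
        using o j by (simp add: bil_diff_l[OF bil] smult_l)
    qed
    show "\<forall>k\<ge>n. coeff R k = 0"
    proof (intro allI impI)
      fix k assume k: "n \<le> k"
      consider "k = n" | "k = Suc n" | "k > Suc n" using k by linarith
      then show "coeff R k = 0"
      proof cases
        case 1 then show ?thesis unfolding R_def c_def by (simp add: lc_phi)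
      next
        case 2 then show ?thesis unfolding R_def using l
          by (simp add: lc_phi coeff_eq_0 deg_phi)
      next
        case 3 then show ?thesis unfolding R_def using d
          by (simp add: coeff_eq_0 deg_phi)
      qed
    qed
  qed
  hence "P - (\<phi> (Suc n) + smult c (\<phi> n)) = 0" unfolding R_def by (simp add: diff_diff_eq)
  hence "P = \<phi> (Suc n) + smult c (\<phi> n)" by simp
  then show ?thesis by blast
qed

lemma L2:
  assumes b: "biorth B \<phi> \<psi>" and bd: "biorth Bd \<phi>d \<psi>d"
    and Bd: "\<And>p q. Bd p q = B p ([:-sd, 1:] * q)"
    and nz: "\<And>n. poly (\<psi> n) sd \<noteq> 0"
  shows "[:-sd, 1:] * \<psi>d n = \<psi> (Suc n) + smult (- poly (\<psi> (Suc n)) sd / poly (\<psi> n) sd) (\<psi> n)"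
    and "\<phi> (Suc n) = \<phi>d (Suc n) + smult (biorth.h B \<phi> \<psi> (Suc n) /
            ((- poly (\<psi> (Suc n)) sd / poly (\<psi> n) sd) * biorth.h B \<phi> \<psi> n)) (\<phi>d n)"
proof -
  interpret b: biorth B \<phi> \<psi> by (rule b)
  interpret T: biorth "\<lambda>p q. B q p" \<psi> \<phi> by (rule b.T)
  interpret d: biorth Bd \<phi>d \<psi>d by (rule bd)
  define qd where "qd = - poly (\<psi> (Suc n)) sd / poly (\<psi> n) sd"
  define x where "x = [:-sd, 1::complex:]"
  have dx: "degree x = 1" and lx: "lead_coeff x = 1" and px: "poly x sd = 0" unfolding x_def by simp_all
  have xmul: "degree (x * p) = Suc (degree p) \<and> lead_coeff (x * p) = lead_coeff p" if "p \<noteq> 0" for p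
  proof -
    have "x \<noteq> 0" using dx by auto
    have dg: "degree (x * p) = Suc (degree p)" using \<open>x \<noteq> 0\<close> that dx by (simp add: degree_mult_eq)
    have "lead_coeff (x * p) = lead_coeff x * lead_coeff p" by (rule lead_coeff_mult)
    then show ?thesis using dg lx by simp
  qed
  have xle: "degree (x * p) \<le> Suc (degree p)" for p
    using degree_mult_le[of x p] dx by simp
  have psid_nz: "\<psi>d n \<noteq> 0" using d.deg_psi[of n] d.lc_psi[of n] by auto
  have Q1: "degree (x * \<psi>d n) \<le> Suc n" using xle[of "\<psi>d n"] d.deg_psi by simp
  have Q2: "coeff (x * \<psi>d n) (Suc n) = 1"
  proof -
    note m = xmul[OF psid_nz]
    have dg: "degree (x * \<psi>d n) = Suc n" using conjunct1[OF m] d.deg_psi[of n] by simp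
    have lc: "coeff (x * \<psi>d n) (degree (x * \<psi>d n)) = coeff (\<psi>d n) (degree (\<psi>d n))"
      using conjunct2[OF m] .
    show ?thesis using lc[unfolded dg d.deg_psi] d.lc_psi[of n] by simp
  qed
  have Q3: "\<forall>j<n. B (monom 1 j) (x * \<psi>d n) = 0"
  proof (intro allI impI)
    fix j assume j: "j < n"
    have "B (monom 1 j) (x * \<psi>d n) = Bd (monom 1 j) (\<psi>d n)" using Bd x_def by simp
    also have "\<dots> = coeff (monom 1 j) n * d.h n" by (rule d.gen_psi) (use j in \<open>simp add: degree_monom_eq\<close>)
    also have "\<dots> = 0" using j by (simp add: coeff_monom)
    finally show "B (monom 1 j) (x * \<psi>d n) = 0" .
  qed
  obtain c where c: "x * \<psi>d n = \<psi> (Suc n) + smult c (\<psi> n)"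
    using T.decomp[OF Q1 Q2] Q3 by auto
  have "0 = poly (\<psi> (Suc n)) sd + c * poly (\<psi> n) sd"
    using arg_cong[OF c, of "\<lambda>p. poly p sd"] px by simp
  hence "c = qd" unfolding qd_def using nz[of n] by (simp add: field_simps) (metis add_eq_0_iff)
  hence part1: "x * \<psi>d n = \<psi> (Suc n) + smult qd (\<psi> n)" using c by simp
  then show "[:-sd, 1:] * \<psi>d n = \<psi> (Suc n) + smult (- poly (\<psi> (Suc n)) sd / poly (\<psi> n) sd) (\<psi> n)"
    unfolding x_def qd_def .
  have P3: "\<forall>j<n. Bd (\<phi> (Suc n)) (monom 1 j) = 0"
  proof (intro allI impI)
    fix j assume j: "j < n"
    have dj: "degree (x * monom 1 j) \<le> Suc j" using xle[of "monom 1 j"] by (simp add: degree_monom_eq)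
    have "Bd (\<phi> (Suc n)) (monom 1 j) = B (\<phi> (Suc n)) (x * monom 1 j)" using Bd x_def by simp
    also have "\<dots> = coeff (x * monom 1 j) (Suc n) * b.h (Suc n)"
      by (rule b.gen_phi) (use dj j in simp)
    also have "coeff (x * monom 1 j) (Suc n) = 0" by (rule coeff_eq_0) (use dj j in simp)
    finally show "Bd (\<phi> (Suc n)) (monom 1 j) = 0" by simp
  qed
  obtain c2 where c2: "\<phi> (Suc n) = \<phi>d (Suc n) + smult c2 (\<phi>d n)"
    using d.decomp[of "\<phi> (Suc n)" n] b.deg_phi b.lc_phi P3 by auto
  have e1: "Bd (\<phi> (Suc n)) (\<psi>d n) = c2 * d.h n"
    by (subst c2) (simp add: d.add_l d.smult_l d.orth d.h_def)
  have e2: "Bd (\<phi> (Suc n)) (\<psi>d n) = b.h (Suc n)"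
    using Bd[of "\<phi> (Suc n)" "\<psi>d n"] part1 unfolding x_def
    by (simp add: b.add_r b.smult_r b.orth b.h_def)
  have g1: "B (\<phi>d n) (\<psi> (Suc n)) = 0"
    using b.gen_psi[of "\<phi>d n" "Suc n"] d.deg_phi[of n] by (simp add: coeff_eq_0)
  have g2: "B (\<phi>d n) (\<psi> n) = b.h n"
    using b.gen_psi[of "\<phi>d n" n] d.deg_phi[of n] d.lc_phi[of n] by simp
  have e3: "d.h n = qd * b.h n"
    using Bd[of "\<phi>d n" "\<psi>d n"] part1 unfolding x_def d.h_def
    by (simp add: b.add_r b.smult_r g1 g2)
  have "c2 = b.h (Suc n) / (qd * b.h n)"
    using e1 e2 e3 d.h_nz[of n] by (simp add: field_simps)
  then show "\<phi> (Suc n) = \<phi>d (Suc n) + smult (b.h (Suc n) /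
            ((- poly (\<psi> (Suc n)) sd / poly (\<psi> n) sd) * b.h n)) (\<phi>d n)"
    using c2 unfolding qd_def by simp
qed

lemma (in biorth) tau_prod: "tau B n = (\<Prod>k<n. h k)"
proof (cases "n = 0")
  case True then show ?thesis by (simp add: tau_def)
next
  case False
  define G where "G = mat n n (\<lambda>(i, j). B (monom 1 i) (monom 1 j))"
  define L where "L = mat n n (\<lambda>(i, k). coeff (\<phi> i) k)"
  define U where "U = mat n n (\<lambda>(k, j). coeff (\<psi> j) k)"
  have cG: "G \<in> carrier_mat n n" and cL: "L \<in> carrier_mat n n" and cU: "U \<in> carrier_mat n n"
    unfolding G_def L_def U_def by auto
  have LG: "L * G = mat n n (\<lambda>(i, l). B (\<phi> i) (monom 1 l))"
  proof (rule eq_matI)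
    fix i l assume i: "i < dim_row (mat n n (\<lambda>(i, l). B (\<phi> i) (monom 1 l)))"
      and l: "l < dim_col (mat n n (\<lambda>(i, l). B (\<phi> i) (monom 1 l)))"
    have "(L * G) $$ (i, l) = (\<Sum>k\<in>{0..<n}. coeff (\<phi> i) k * B (monom 1 k) (monom 1 l))"
      using i l unfolding L_def G_def by (simp add: scalar_prod_def)
    also have "\<dots> = B (\<phi> i) (monom 1 l)"
      using expand_l[OF bil, of "\<phi> i" n "monom 1 l"] i by (simp add: deg_phi atLeast0LessThan)
    finally show "(L * G) $$ (i, l) = mat n n (\<lambda>(i, l). B (\<phi> i) (monom 1 l)) $$ (i, l)"
      using i l by simp
  qed (simp_all add: L_def G_def)
  have LGU: "L * G * U = mat n n (\<lambda>(i, j). if i = j then h i else 0)"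
  proof (rule eq_matI)
    fix i j assume i: "i < dim_row (mat n n (\<lambda>(i, j). if i = j then h i else 0 :: complex))"
      and j: "j < dim_col (mat n n (\<lambda>(i, j). if i = j then h i else 0 :: complex))"
    have "(L * G * U) $$ (i, j) = (\<Sum>l\<in>{0..<n}. B (\<phi> i) (monom 1 l) * coeff (\<psi> j) l)"
      using i j unfolding LG U_def by (simp add: scalar_prod_def)
    also have "\<dots> = B (\<phi> i) (\<psi> j)"
      using expand_r[OF bil, of "\<psi> j" n "\<phi> i"] j by (simp add: deg_psi atLeast0LessThan mult.commute)
    also have "\<dots> = (if i = j then h i else 0)" by (simp add: h_def orth)
    finally show "(L * G * U) $$ (i, j) = mat n n (\<lambda>(i, j). if i = j then h i else 0) $$ (i, j)"
      using i j by simp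
  qed (simp_all add: L_def G_def U_def LG)
  have dL: "det L = 1"
  proof -
    have "det L = prod_list (diag_mat L)"
      by (rule det_lower_triangular[OF _ cL]) (simp add: L_def coeff_eq_0 deg_phi)
    also have "\<dots> = 1" unfolding prod_list_diag_prod using cL by (simp add: L_def lc_phi)
    finally show ?thesis .
  qed
  have dU: "det U = 1"
  proof -
    have "det U = prod_list (diag_mat U)"
      by (rule det_upper_triangular[OF _ cU]) (auto simp: upper_triangular_def U_def coeff_eq_0 deg_psi)
    also have "\<dots> = 1" unfolding prod_list_diag_prod using cU by (simp add: U_def lc_psi)
    finally show ?thesis .
  qed
  have dD: "det (L * G * U) = (\<Prod>k<n. h k)"
  proof -
    have "det (L * G * U) = prod_list (diag_mat (L * G * U))"
      by (rule det_upper_triangular[of _ n]) (auto simp: LGU upper_triangular_def)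
    also have "\<dots> = (\<Prod>k<n. h k)" unfolding prod_list_diag_prod
      by (simp add: LGU atLeast0LessThan)
    finally show ?thesis .
  qed
  have "det (L * G * U) = det L * det G * det U"
    using det_mult[OF mult_carrier_mat[OF cL cG] cU] det_mult[OF cL cG] by simp
  hence "det G = (\<Prod>k<n. h k)" using dL dU dD by simp
  then show ?thesis using False unfolding tau_def G_def by simp
qed

lemma tau_ratio:
  assumes b: "biorth B \<phi> \<psi>"
  shows "biorth.h B \<phi> \<psi> (Suc n) / (q * biorth.h B \<phi> \<psi> n)
     = tau B n * tau B (n+2) / (q * (tau B (n+1))^2)"
proof -
  interpret b: biorth B \<phi> \<psi> by (rule b)
  have t1: "tau B (Suc n) = tau B n * b.h n" by (simp add: b.tau_prod)
  have t2: "tau B (Suc (Suc n)) = tau B n * b.h n * b.h (Suc n)" by (simp add: b.tau_prod)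
  have t0: "tau B n \<noteq> 0" by (simp add: b.tau_prod b.h_nz)
  show ?thesis
  proof (cases "q = 0")
    case True then show ?thesis by simp
  next
    case False
    then show ?thesis using t0 b.h_nz[of n] b.h_nz[of "Suc n"]
      by (simp add: t1 t2 field_simps power2_eq_square)
  qed
qed

theorem theorem2:
  fixes B Bs Bd :: "complex poly \<Rightarrow> complex poly \<Rightarrow> complex"
    and ss sd :: complex
    and \<phi> \<psi> \<phi>s \<psi>s \<phi>d \<psi>d :: "nat \<Rightarrow> complex poly"
  assumes bil: "bilinear_form B" and bils: "bilinear_form Bs" and bild: "bilinear_form Bd"
    and Bs_def: "\<And>i j. Bs (monom 1 i) (monom 1 j) = B ([:-ss, 1:] * monom 1 i) (monom 1 j)"
    and Bd_def: "\<And>i j. Bd (monom 1 i) (monom 1 j) = B (monom 1 i) ([:-sd, 1:] * monom 1 j)"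
    and tau_nz: "\<And>n. tau B n \<noteq> 0"
    and bo: "monic_biorth B \<phi> \<psi>"
    and bos: "monic_biorth Bs \<phi>s \<psi>s"
    and bod: "monic_biorth Bd \<phi>d \<psi>d"
    and nz_s: "\<And>n. poly (\<phi> n) ss \<noteq> 0"
    and nz_d: "\<And>n. poly (\<psi> n) sd \<noteq> 0"
  shows "\<forall>n.
    (let qs = - poly (\<phi> (n+1)) ss / poly (\<phi> n) ss;
         qd = - poly (\<psi> (n+1)) sd / poly (\<psi> n) sd;
         ed = tau B n * tau B (n+2) / (qd * (tau B (n+1))^2);
         es = tau B n * tau B (n+2) / (qs * (tau B (n+1))^2)
     in [:-ss, 1:] * \<phi>s n = \<phi> (n+1) + smult qs (\<phi> n) \<and>
        \<phi> (n+1) = \<phi>d (n+1) + smult ed (\<phi>d n) \<and>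
        [:-sd, 1:] * \<psi>d n = \<psi> (n+1) + smult qd (\<psi> n) \<and>
        \<psi> (n+1) = \<psi>s (n+1) + smult es (\<psi>s n))"
proof (intro allI)
  fix n
  define x where "x = [:-ss, 1::complex:]"
  define y where "y = [:-sd, 1::complex:]"
  have Bs': "\<And>p q. Bs p q = B ([:-ss, 1:] * p) q"
    by (rule bil_ext[OF bils bil_mult_l[OF bil]]) (simp add: Bs_def)
  have Bd': "\<And>p q. Bd p q = B p ([:-sd, 1:] * q)"
    by (rule bil_ext[OF bild bil_mult_r[OF bil]]) (simp add: Bd_def)
  have b: "biorth B \<phi> \<psi>" using bil bo by (simp add: biorth_def)
  have bs: "biorth Bs \<phi>s \<psi>s" using bils bos by (simp add: biorth_def)
  have bd: "biorth Bd \<phi>d \<psi>d" using bild bod by (simp add: biorth_def)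
  interpret b: biorth B \<phi> \<psi> by (rule b)
  interpret bs: biorth Bs \<phi>s \<psi>s by (rule bs)
  note A = L2[OF b bd Bd' nz_d, of n]
  note C = L2[OF b.T bs.T _ nz_s, of n]
  have C1: "[:-ss, 1:] * \<phi>s n = \<phi> (Suc n) + smult (- poly (\<phi> (Suc n)) ss / poly (\<phi> n) ss) (\<phi> n)"
    using C(1) Bs' by simp
  have C2: "\<psi> (Suc n) = \<psi>s (Suc n) + smult (b.h (Suc n) /
            ((- poly (\<phi> (Suc n)) ss / poly (\<phi> n) ss) * b.h n)) (\<psi>s n)"
    using C(2) Bs' b.T_h by simp
  show "let qs = - poly (\<phi> (n+1)) ss / poly (\<phi> n) ss;
         qd = - poly (\<psi> (n+1)) sd / poly (\<psi> n) sd;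
         ed = tau B n * tau B (n+2) / (qd * (tau B (n+1))^2);
         es = tau B n * tau B (n+2) / (qs * (tau B (n+1))^2)
     in [:-ss, 1:] * \<phi>s n = \<phi> (n+1) + smult qs (\<phi> n) \<and>
        \<phi> (n+1) = \<phi>d (n+1) + smult ed (\<phi>d n) \<and>
        [:-sd, 1:] * \<psi>d n = \<psi> (n+1) + smult qd (\<psi> n) \<and>
        \<psi> (n+1) = \<psi>s (n+1) + smult es (\<psi>s n)"
    unfolding Let_def tau_ratio[OF b, symmetric] Suc_eq_plus1 using A[unfolded Suc_eq_plus1] C1[unfolded Suc_eq_plus1] C2[unfolded Suc_eq_plus1]
    by blast
qed

end
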